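(* Let $\mathbb{T}_S$ be a spherically symmetric tree with origin $\mathcal{O}$, and consider the cone percolation process on $\mathbb{T}_S$ with radius of influence $R$, law $\mathbb{P}$ and survival event $V$. For $n\ge1$ let $$\rho_n=\prod_{k=0}^{n-1}\Big[1-\prod_{i=0}^{k}\mathbb{P}(R<i+1)\Big].$$ If $\lim_{n\to\infty}\sqrt[n]{\rho_n} > e^{-\dim\inf\partial\mathbb{T}_S}$, then $\mathbb{P}(V)>0$.
   Context: Cone percolation process: Let $\mathbb{T}$ be a tree with origin $\mathcal{O}$ and graph distance $d(\cdot,\cdot)$. Write $u\le v$ if $u$ lies on the path from $\mathcal{O}$ to $v$. Let $R$ be a random variable with values in $\{0,1,2,\dots\}$, $p_k=\mathbb{P}(R=k)$, and assume $p_0\in(0,1)$. Let $\{R_v\}$ be i.i.d. copies of $R$ indexed by the vertices. For each vertex $u$ let $B_u=\{v: u\le v,\ d(u,v)\le R_u\}$. Set $I_0=\{\mathcal{O}\}$, $I_{n+1}=\bigcup_{u\in I_n}B_u$, $I=\bigcup_n I_n$; survival is the event $V=\{|I|=\infty\}$. A tree is spherically symmetric if any two vertices at the same distance from $\mathcal{O}$ have the same degree. For a vertex $u$ and $n\ge1$, $M_n(u)=|\{v: u\le v,\ d(v,\mathcal{O})=d(u,\mathcal{O})+n\}|$, and $\dim\inf\partial\mathbb{T}:=\lim_{n\to\infty}\min_{v}\frac1n\ln M_n(v)$, the minimum being over all vertices $v$ (the limits in the statement are assumed to exist). *)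

theory Defs
  imports "HOL-Probability.Probability"
begin

text \<open>A spherically symmetric (locally finite) tree is determined, up to isomorphism,
by the number c k of children of each vertex at distance k from the origin.
Vertices are the paths from the origin: lists xs with xs!i < c i; the origin is [].\<close>

definition ss_verts :: "(nat \<Rightarrow> nat) \<Rightarrow> nat list set" where
  "ss_verts c = {xs. \<forall>i<length xs. xs ! i < c i}"

text \<open>u \<le> v iff u lies on the path from the origin to v, i.e. u is a prefix of v;
the graph distance between comparable vertices is the difference of lengths.\<close>

definition tree_le :: "nat list \<Rightarrow> nat list \<Rightarrow> bool" where
  "tree_le u v \<longleftrightarrow> (\<exists>w. v = u @ w)"

definition Mn :: "(nat \<Rightarrow> nat) \<Rightarrow> nat \<Rightarrow> nat list \<Rightarrow> nat" where
  "Mn c n u = card {v \<in> ss_verts c. tree_le u v \<and> length v = length u + n}"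

definition cone :: "(nat \<Rightarrow> nat) \<Rightarrow> nat list \<Rightarrow> nat \<Rightarrow> nat list set" where
  "cone c u r = {v \<in> ss_verts c. tree_le u v \<and> length v - length u \<le> r}"

fun infected :: "(nat \<Rightarrow> nat) \<Rightarrow> (nat list \<Rightarrow> nat) \<Rightarrow> nat \<Rightarrow> nat list set" where
  "infected c Rv 0 = {[]}"
| "infected c Rv (Suc n) = (\<Union>u\<in>infected c Rv n. cone c u (Rv u))"

definition rho :: "nat pmf \<Rightarrow> nat \<Rightarrow> real" where
  "rho p n = (\<Prod>k<n. 1 - (\<Prod>i\<le>k. measure_pmf.prob p {j. j < i + 1}))"

end

theory Submission
  imports Defs
begin


fun iid :: "nat pmf \<Rightarrow> nat \<Rightarrow> nat list pmf" where
  "iid p 0 = return_pmf []"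
| "iid p (Suc n) = bind_pmf p (\<lambda>x. map_pmf (Cons x) (iid p n))"

lemma iid_len: "xs \<in> set_pmf (iid p n) \<Longrightarrow> length xs = n"
  by (induction n arbitrary: xs) auto

lemma prob_bind_pmf:
  "measure_pmf.prob (bind_pmf A f) X = measure_pmf.expectation A (\<lambda>x. measure_pmf.prob (f x) X)"
proof -
  have "emeasure (measure_pmf (bind_pmf A f)) X = (\<integral>\<^sup>+x. emeasure (f x) X \<partial>A)" by simp
  also have "\<dots> = (\<integral>\<^sup>+x. ennreal (measure_pmf.prob (f x) X) \<partial>A)"
    by (simp add: measure_pmf.emeasure_eq_measure)
  also have "\<dots> = ennreal (measure_pmf.expectation A (\<lambda>x. measure_pmf.prob (f x) X))"
    by (rule nn_integral_eq_integral)
       (auto intro!: measure_pmf.integrable_const_bound[where B=1])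
  finally show ?thesis
    by (simp add: measure_pmf.emeasure_eq_measure integral_nonneg)
qed

lemma iid_add: "iid p (n + m) = bind_pmf (iid p n) (\<lambda>a. map_pmf (\<lambda>b. a @ b) (iid p m))"
  by (induction n) (simp_all add: bind_return_pmf bind_return_pmf' map_pmf_def bind_assoc_pmf)

lemma expectation_ind_const:
  "measure_pmf.expectation A (\<lambda>a. indicator C a * (k::real)) = measure_pmf.prob A C * k"
  by (simp add: measure_pmf.emeasure_eq_measure)

lemma prob_append:
  "measure_pmf.prob (iid p (n + m)) {r. take n r \<in> C \<and> drop n r \<in> D}
   = measure_pmf.prob (iid p n) C * measure_pmf.prob (iid p m) D"
proof -
  have "measure_pmf.prob (iid p (n + m)) {r. take n r \<in> C \<and> drop n r \<in> D}
     = measure_pmf.expectation (iid p n) (\<lambda>a. measure_pmf.prob (iid p m) ((\<lambda>b. a @ b) -` {r. take n r \<in> C \<and> drop n r \<in> D}))"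
    by (simp add: iid_add prob_bind_pmf)
  also have "\<dots> = measure_pmf.expectation (iid p n) (\<lambda>a. indicator C a * measure_pmf.prob (iid p m) D)"
    by (rule integral_cong_AE) (auto intro!: AE_pmfI simp: iid_len indicator_def)
  also have "\<dots> = measure_pmf.prob (iid p n) C * measure_pmf.prob (iid p m) D"
    by (rule expectation_ind_const)
  finally show ?thesis .
qed

lemma prob_blocks:
  "measure_pmf.prob (iid p (k * n)) {r. \<forall>b<k. take n (drop (b * n) r) \<in> C}
   = measure_pmf.prob (iid p n) C ^ k"
proof (induction k)
  case 0
  then show ?case by simp
next
  case (Suc k)
  have "{r. \<forall>b<Suc k. take n (drop (b * n) r) \<in> C}
      = {r. take n r \<in> C \<and> drop n r \<in> {r. \<forall>b<k. take n (drop (b * n) r) \<in> C}}"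
    by (auto simp: less_Suc_eq_0_disj drop_drop add.commute)
  then show ?case using Suc prob_append[of p n "k*n" C "{r. \<forall>b<k. take n (drop (b * n) r) \<in> C}"]
    by (simp del: iid.simps)
qed


lemma prob_box:
  "measure_pmf.prob (iid p n) {r. \<forall>j<n. r ! j \<in> S j} = (\<Prod>j<n. measure_pmf.prob p (S j))"
proof (induction n arbitrary: S)
  case 0
  then show ?case by simp
next
  case (Suc n)
  have "measure_pmf.prob (iid p (Suc n)) {r. \<forall>j<Suc n. r ! j \<in> S j}
     = measure_pmf.expectation p (\<lambda>x. measure_pmf.prob (iid p n) (Cons x -` {r. \<forall>j<Suc n. r ! j \<in> S j}))"
    by (simp add: prob_bind_pmf)
  also have "\<dots> = measure_pmf.expectation p (\<lambda>x. indicator (S 0) x * measure_pmf.prob (iid p n) {r. \<forall>j<n. r ! j \<in> S (Suc j)})"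
  proof (rule Bochner_Integration.integral_cong)
    fix x
    have "Cons x -` {r. \<forall>j<Suc n. r ! j \<in> S j} = (if x \<in> S 0 then {r. \<forall>j<n. r ! j \<in> S (Suc j)} else {})"
      by (auto simp: All_less_Suc2)
    then show "measure_pmf.prob (iid p n) (Cons x -` {r. \<forall>j<Suc n. r ! j \<in> S j}) = indicator (S 0) x * measure_pmf.prob (iid p n) {r. \<forall>j<n. r ! j \<in> S (Suc j)}"
      by (simp add: indicator_def)
  qed simp
  also have "\<dots> = measure_pmf.prob p (S 0) * (\<Prod>j<n. measure_pmf.prob p (S (Suc j)))"
    by (simp add: expectation_ind_const Suc)
  finally show ?case by (simp only: prod.lessThan_Suc_shift)
qed

lemma chebyshev_pmf:
  fixes F G :: "nat \<Rightarrow> real"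
  assumes F: "mono F" and G: "mono G" and Fb: "\<And>x. 0 \<le> F x \<and> F x \<le> 1"
    and Gb: "\<And>x. 0 \<le> G x \<and> G x \<le> 1"
  shows "measure_pmf.expectation q F * measure_pmf.expectation q G
         \<le> measure_pmf.expectation q (\<lambda>x. F x * G x)"
proof -
  define a where "a = measure_pmf.expectation q F"
  obtain c where c: "\<And>x. 0 \<le> (F x - a) * (G x - c)"
  proof (cases "\<exists>x. a \<le> F x")
    case True
    define x0 where "x0 = (LEAST x. a \<le> F x)"
    have x0: "a \<le> F x0" unfolding x0_def using True by (metis LeastI)
    show ?thesis
    proof (rule that[of "G x0"])
      fix x
      show "0 \<le> (F x - a) * (G x - G x0)"
      proof (cases "x0 \<le> x")
        case True
        then show ?thesis using monoD[OF F True] monoD[OF G True] x0 by auto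
      next
        case False
        then have "x < x0" by simp
        then have "x \<le> x0" "\<not> a \<le> F x" using not_less_Least[of x "\<lambda>x. a \<le> F x"] unfolding x0_def by auto
        then show ?thesis using monoD[OF G \<open>x \<le> x0\<close>]
          by (intro mult_nonpos_nonpos) auto
      qed
    qed
  next
    case False
    show ?thesis
    proof (rule that[of 1])
      fix x show "0 \<le> (F x - a) * (G x - 1)"
      proof -
        have "F x < a" using False by (simp add: not_le)
        then show ?thesis using Gb[of x] by (intro mult_nonpos_nonpos) auto
      qed
    qed
  qed
  have intF: "integrable q F" by (rule measure_pmf.integrable_const_bound[where B=1]) (use Fb in auto)
  have intG: "integrable q G" by (rule measure_pmf.integrable_const_bound[where B=1]) (use Gb in auto)
  have intFG: "integrable q (\<lambda>x. F x * G x)"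
    by (rule measure_pmf.integrable_const_bound[where B=1])
       (use Fb Gb in \<open>auto simp: abs_mult intro!: mult_le_one\<close>)
  have "0 \<le> measure_pmf.expectation q (\<lambda>x. (F x - a) * (G x - c))"
    by (rule integral_nonneg_AE) (simp add: c)
  also have "(\<lambda>x. (F x - a) * (G x - c)) = (\<lambda>x. F x * G x - c * F x - a * G x + a * c)"
    by (auto simp: algebra_simps)
  also have "measure_pmf.expectation q \<dots> = measure_pmf.expectation q (\<lambda>x. F x * G x)
      - c * a - a * measure_pmf.expectation q G + a * c"
    using intF intG intFG by (simp add: a_def)
  finally show ?thesis by (simp add: a_def)
qed

definition up :: "nat list set \<Rightarrow> bool" where
  "up A \<longleftrightarrow> (\<forall>xs ys. xs \<in> A \<longrightarrow> length ys = length xs \<longrightarrow> (\<forall>i<length xs. xs ! i \<le> ys ! i) \<longrightarrow> ys \<in> A)"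

lemma upD: "up A \<Longrightarrow> xs \<in> A \<Longrightarrow> length ys = length xs \<Longrightarrow> (\<And>i. i < length xs \<Longrightarrow> xs ! i \<le> ys ! i) \<Longrightarrow> ys \<in> A"
  unfolding up_def by blast

lemma up_cons_le: "up C \<Longrightarrow> x # xs \<in> C \<Longrightarrow> x \<le> y \<Longrightarrow> length ys = length xs \<Longrightarrow> (\<And>i. i < length xs \<Longrightarrow> xs ! i \<le> ys ! i) \<Longrightarrow> y # ys \<in> C"
  by (erule upD, assumption) (auto simp: nth_Cons split: nat.splits)

lemma up_Int: "up A \<Longrightarrow> up B \<Longrightarrow> up (A \<inter> B)"
  unfolding up_def by blast

lemma up_UNIV: "up UNIV" unfolding up_def by blast

lemma harris:
  assumes "up A" "up B"
  shows "measure_pmf.prob (iid p n) A * measure_pmf.prob (iid p n) B \<le> measure_pmf.prob (iid p n) (A \<inter> B)"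
  using assms
proof (induction n arbitrary: A B)
  case 0
  then show ?case by (simp add: indicator_def)
next
  case (Suc n)
  define F where "F = (\<lambda>x. measure_pmf.prob (iid p n) (Cons x -` A))"
  define G where "G = (\<lambda>x. measure_pmf.prob (iid p n) (Cons x -` B))"
  have upc: "up (Cons x -` C)" if "up C" for x C
    unfolding up_def using up_cons_le[OF that] by blast
  have monoc: "mono (\<lambda>x. measure_pmf.prob (iid p n) (Cons x -` C))" if "up C" for C
  proof (rule monoI, rule measure_pmf.finite_measure_mono)
    fix x y :: nat assume "x \<le> y"
    then show "Cons x -` C \<subseteq> Cons y -` C"
      using up_cons_le[OF that] by blast
  qed simp
  have "measure_pmf.prob (iid p (Suc n)) A * measure_pmf.prob (iid p (Suc n)) B
      = measure_pmf.expectation p F * measure_pmf.expectation p G"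
    by (simp add: prob_bind_pmf F_def G_def)
  also have "\<dots> \<le> measure_pmf.expectation p (\<lambda>x. F x * G x)"
    unfolding F_def G_def
    by (rule chebyshev_pmf) (use monoc Suc.prems in auto)
  also have "\<dots> \<le> measure_pmf.expectation p (\<lambda>x. measure_pmf.prob (iid p n) (Cons x -` (A \<inter> B)))"
  proof (rule integral_mono)
    show "integrable (measure_pmf p) (\<lambda>x. F x * G x)"
      by (rule measure_pmf.integrable_const_bound[where B=1])
         (auto simp: F_def G_def abs_mult intro!: mult_le_one)
    show "integrable (measure_pmf p) (\<lambda>x. measure_pmf.prob (iid p n) (Cons x -` (A \<inter> B)))"
      by (rule measure_pmf.integrable_const_bound[where B=1]) auto
    fix x show "F x * G x \<le> measure_pmf.prob (iid p n) (Cons x -` (A \<inter> B))"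
      unfolding F_def G_def vimage_Int by (rule Suc.IH) (use upc Suc.prems in auto)
  qed
  also have "\<dots> = measure_pmf.prob (iid p (Suc n)) (A \<inter> B)"
    by (simp add: prob_bind_pmf)
  finally show ?case .
qed

lemma harris_prod:
  fixes m :: nat
  assumes "\<And>k. k < m \<Longrightarrow> up (A k)"
  shows "(\<Prod>k<m. measure_pmf.prob (iid p n) (A k)) \<le> measure_pmf.prob (iid p n) (\<Inter>k<m. A k)"
  using assms
proof (induction m)
  case 0
  then show ?case by simp
next
  case (Suc m)
  have up1: "up (\<Inter>k<m. A k)"
    unfolding up_def
  proof (intro allI impI)
    fix xs ys assume a: "xs \<in> (\<Inter>k<m. A k)" "length ys = length xs" "\<forall>i<length xs. xs ! i \<le> ys ! i"
    show "ys \<in> (\<Inter>k<m. A k)"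
    proof
      fix k assume "k \<in> {..<m}"
      then have "up (A k)" "xs \<in> A k" using Suc.prems a(1) by auto
      then show "ys \<in> A k" using a(2,3) by (auto intro: upD)
    qed
  qed
  have "(\<Prod>k<Suc m. measure_pmf.prob (iid p n) (A k))
      = (\<Prod>k<m. measure_pmf.prob (iid p n) (A k)) * measure_pmf.prob (iid p n) (A m)" by simp
  also have "\<dots> \<le> measure_pmf.prob (iid p n) (\<Inter>k<m. A k) * measure_pmf.prob (iid p n) (A m)"
    using Suc by (intro mult_right_mono) auto
  also have "\<dots> \<le> measure_pmf.prob (iid p n) ((\<Inter>k<m. A k) \<inter> A m)"
    by (rule harris) (use up1 Suc.prems in auto)
  also have "(\<Inter>k<m. A k) \<inter> A m = (\<Inter>k<Suc m. A k)"
    by (auto simp: lessThan_Suc)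
  finally show ?case .
qed


definition cov :: "nat list \<Rightarrow> bool" where
  "cov rs \<longleftrightarrow> (\<forall>k<length rs. \<exists>j\<le>k. k + 1 \<le> j + rs ! j)"

definition Ak :: "nat \<Rightarrow> nat list set" where
  "Ak k = {rs. \<exists>j\<le>k. j < length rs \<and> k + 1 \<le> j + rs ! j}"

lemma up_Ak: "up (Ak k)"
  unfolding up_def
proof (intro allI impI)
  fix xs ys :: "nat list"
  assume a: "xs \<in> Ak k" "length ys = length xs" "\<forall>i<length xs. xs ! i \<le> ys ! i"
  then obtain j where j: "j \<le> k" "j < length xs" "k + 1 \<le> j + xs ! j" unfolding Ak_def by blast
  have "xs ! j \<le> ys ! j" using a(3) j(2) by blast
  then show "ys \<in> Ak k" unfolding Ak_def using j a(2) by (intro CollectI exI[of _ j]) auto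
qed

lemma prob_Ak:
  assumes "k < n"
  shows "measure_pmf.prob (iid p n) (Ak k) = 1 - (\<Prod>i\<le>k. measure_pmf.prob p {j. j < i + 1})"
proof -
  define S where "S j = (if j \<le> k then {..k - j} else UNIV)" for j
  have pt: "rs \<in> Ak k \<longleftrightarrow> \<not> (\<forall>j<n. rs ! j \<in> S j)" if "length rs = n" for rs
  proof -
    have "rs \<in> Ak k \<longleftrightarrow> (\<exists>j\<le>k. j < n \<and> k + 1 \<le> j + rs ! j)" using that by (simp add: Ak_def)
    also have "\<dots> \<longleftrightarrow> (\<exists>j<n. j \<le> k \<and> \<not> rs ! j \<le> k - j)" by (auto simp: not_le)
    also have "\<dots> \<longleftrightarrow> \<not> (\<forall>j<n. rs ! j \<in> S j)" by (auto simp: S_def)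
    finally show ?thesis .
  qed
  have "Ak k \<inter> set_pmf (iid p n) = (UNIV - {r. \<forall>j<n. r ! j \<in> S j}) \<inter> set_pmf (iid p n)"
  proof (intro equalityI subsetI)
    fix x assume "x \<in> Ak k \<inter> set_pmf (iid p n)"
    then show "x \<in> (UNIV - {r. \<forall>j<n. r ! j \<in> S j}) \<inter> set_pmf (iid p n)"
      using pt[of x] iid_len[of x p n] by simp
  next
    fix x assume "x \<in> (UNIV - {r. \<forall>j<n. r ! j \<in> S j}) \<inter> set_pmf (iid p n)"
    then show "x \<in> Ak k \<inter> set_pmf (iid p n)"
      using pt[of x] iid_len[of x p n] by simp
  qed
  then have "measure_pmf.prob (iid p n) (Ak k) = measure_pmf.prob (iid p n) (UNIV - {r. \<forall>j<n. r ! j \<in> S j})"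
    using measure_Int_set_pmf[of "iid p n" "Ak k"] measure_Int_set_pmf[of "iid p n" "UNIV - {r. \<forall>j<n. r ! j \<in> S j}"]
    by simp
  also have "\<dots> = 1 - (\<Prod>j<n. measure_pmf.prob p (S j))"
    using measure_pmf.prob_compl[of "{r. \<forall>j<n. r ! j \<in> S j}" "iid p n"] by (simp add: prob_box)
  also have "(\<Prod>j<n. measure_pmf.prob p (S j)) = (\<Prod>j\<in>{..k}. measure_pmf.prob p (S j))"
    using assms by (intro prod.mono_neutral_right) (auto simp: S_def)
  also have "\<dots> = (\<Prod>i\<le>k. measure_pmf.prob p {j. j < i + 1})"
  proof -
    have e: "{j. j < i + 1} = {..i}" for i :: nat by auto
    show ?thesis unfolding e
      by (rule prod.reindex_bij_witness[where i="\<lambda>i. k - i" and j="\<lambda>j. k - j"])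
         (simp_all add: S_def)
  qed
  finally show ?thesis .
qed

definition pi_n :: "nat pmf \<Rightarrow> nat \<Rightarrow> real" where
  "pi_n p n = measure_pmf.prob (iid p n) {rs. cov rs}"

lemma rho_le_pi: "rho p n \<le> pi_n p n"
proof -
  have "rho p n = (\<Prod>k<n. measure_pmf.prob (iid p n) (Ak k))"
    unfolding rho_def by (intro prod.cong) (auto simp: prob_Ak)
  also have "\<dots> \<le> measure_pmf.prob (iid p n) (\<Inter>k<n. Ak k)"
    by (rule harris_prod) (simp add: up_Ak)
  also have "\<dots> = measure_pmf.prob (iid p n) ((\<Inter>k<n. Ak k) \<inter> set_pmf (iid p n))"
    by (simp add: measure_Int_set_pmf)
  also have "\<dots> \<le> pi_n p n"
    unfolding pi_n_def
  proof (rule measure_pmf.finite_measure_mono)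
    show "(\<Inter>k<n. Ak k) \<inter> set_pmf (iid p n) \<subseteq> {rs. cov rs}"
    proof
      fix x assume x: "x \<in> (\<Inter>k<n. Ak k) \<inter> set_pmf (iid p n)"
      then have len: "length x = n" using iid_len by blast
      show "x \<in> {rs. cov rs}" unfolding cov_def using x len by (auto simp: Ak_def)
    qed
  qed simp
  finally show ?thesis .
qed


definition Xs :: "('v \<Rightarrow> 'a \<Rightarrow> nat) \<Rightarrow> 'v list \<Rightarrow> 'a \<Rightarrow> nat list" where
  "Xs X as \<omega> = map (\<lambda>v. X v \<omega>) as"

lemma measurable_map_list:
  fixes f :: "'i \<Rightarrow> 'a \<Rightarrow> 'b::countable"
  assumes "\<And>i. i \<in> set as \<Longrightarrow> f i \<in> measurable N (count_space UNIV)"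
  shows "(\<lambda>x. map (\<lambda>i. f i x) as) \<in> measurable N (count_space UNIV)"
  using assms
proof (induction as)
  case Nil
  then show ?case by simp
next
  case (Cons a as)
  have m: "(\<lambda>x. (f a x, map (\<lambda>i. f i x) as)) \<in> measurable N (count_space UNIV \<Otimes>\<^sub>M count_space UNIV)"
    using Cons by (intro measurable_Pair) auto
  have c: "(\<lambda>(y, l). y # l) \<in> measurable (count_space UNIV \<Otimes>\<^sub>M count_space UNIV) (count_space (UNIV :: 'b list set))"
    by (simp add: pair_measure_countable)
  have "(\<lambda>x. (\<lambda>(y, l). y # l) (f a x, map (\<lambda>i. f i x) as)) \<in> measurable N (count_space UNIV)"
    by (rule measurable_compose[OF m c])
  then show ?case by simp
qed

lemma pmf_iid_Cons: "pmf (iid p (Suc n)) (x # l) = pmf p x * pmf (iid p n) l"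
proof -
  have "pmf (iid p (Suc n)) (x # l) = measure_pmf.expectation p (\<lambda>y. pmf (map_pmf (Cons y) (iid p n)) (x # l))"
    by (simp add: pmf_bind)
  also have "\<dots> = measure_pmf.expectation p (\<lambda>y. indicator {x} y * pmf (iid p n) l)"
  proof (rule Bochner_Integration.integral_cong)
    fix y
    show "pmf (map_pmf (Cons y) (iid p n)) (x # l) = indicator {x} y * pmf (iid p n) l"
    proof (cases "y = x")
      case True
      then show ?thesis by (simp add: pmf_map_inj')
    next
      case False
      then show ?thesis by (subst pmf_map_outside) auto
    qed
  qed simp
  also have "\<dots> = pmf p x * pmf (iid p n) l"
    by (simp add: expectation_ind_const measure_pmf_single)
  finally show ?thesis .
qed

locale tree_setup =
  fixes M :: "'a measure" and V :: "'v set" and X :: "'v \<Rightarrow> 'a \<Rightarrow> nat" and p :: "nat pmf"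
  assumes ps: "prob_space M"
    and meas: "\<forall>v\<in>V. X v \<in> measurable M (count_space UNIV)"
    and indep: "prob_space.indep_vars M (\<lambda>_. count_space UNIV) X V"
    and law: "\<forall>v\<in>V. distr M (count_space UNIV) (X v) = measure_pmf p"
begin

interpretation P: prob_space M by (rule ps)

lemma Xs_meas: "set as \<subseteq> V \<Longrightarrow> Xs X as \<in> measurable M (count_space UNIV)"
  unfolding Xs_def[abs_def] by (rule measurable_map_list) (use meas in auto)

lemma prob_X_single: "v \<in> V \<Longrightarrow> P.prob (X v -` {x} \<inter> space M) = pmf p x"
proof -
  assume v: "v \<in> V"
  have "P.prob (X v -` {x} \<inter> space M) = measure (distr M (count_space UNIV) (X v)) {x}"
    using v meas by (subst measure_distr) auto
  also have "\<dots> = pmf p x" using v law by (simp add: measure_pmf_single)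
  finally show ?thesis .
qed

lemma prob_Xs_single:
  "distinct as \<Longrightarrow> set as \<subseteq> V \<Longrightarrow> P.prob (Xs X as -` {l} \<inter> space M) = pmf (iid p (length as)) l"
proof (induction as arbitrary: l)
  case Nil
  have "P.prob (space M) = 1" by (rule P.prob_space)
  then show ?case by (auto simp: Xs_def indicator_def)
next
  case (Cons a as)
  have ind: "P.indep_var (PiM {a} (\<lambda>_. count_space UNIV)) (\<lambda>\<omega>. restrict (\<lambda>i. X i \<omega>) {a})
                         (PiM (set as) (\<lambda>_. count_space UNIV)) (\<lambda>\<omega>. restrict (\<lambda>i. X i \<omega>) (set as))"
    using Cons.prems by (intro P.indep_var_restrict[OF indep]) auto
  have m1: "(\<lambda>f. [f a]) \<in> measurable (PiM {a} (\<lambda>_. count_space (UNIV::nat set))) (count_space UNIV)"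
    using measurable_map_list[where f="\<lambda>i (f::'v \<Rightarrow> nat). f i" and as="[a]" and N="PiM {a} (\<lambda>_. count_space (UNIV::nat set))"]
    by (simp add: measurable_component_singleton)
  have m2: "(\<lambda>f. map (\<lambda>i. f i) as) \<in> measurable (PiM (set as) (\<lambda>_. count_space (UNIV::nat set))) (count_space UNIV)"
    using measurable_map_list[where f="\<lambda>i (f::'v \<Rightarrow> nat). f i" and as=as and N="PiM (set as) (\<lambda>_. count_space (UNIV::nat set))"]
    by (simp add: measurable_component_singleton)
  have ind2: "P.indep_var (count_space UNIV) ((\<lambda>f. [f a]) \<circ> (\<lambda>\<omega>. restrict (\<lambda>i. X i \<omega>) {a}))
                 (count_space UNIV) ((\<lambda>f. map (\<lambda>i. f i) as) \<circ> (\<lambda>\<omega>. restrict (\<lambda>i. X i \<omega>) (set as)))"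
    by (rule P.indep_var_compose[OF ind m1 m2])
  have e1: "((\<lambda>f. [f a]) \<circ> (\<lambda>\<omega>. restrict (\<lambda>i. X i \<omega>) {a})) = (\<lambda>\<omega>. [X a \<omega>])" by (auto simp: fun_eq_iff)
  have e2: "((\<lambda>f. map (\<lambda>i. f i) as) \<circ> (\<lambda>\<omega>. restrict (\<lambda>i. X i \<omega>) (set as))) = Xs X as"
    by (auto simp: fun_eq_iff Xs_def)
  have ind3: "P.indep_var (count_space UNIV) (\<lambda>\<omega>. [X a \<omega>]) (count_space UNIV) (Xs X as)"
    using ind2 unfolding e1 e2 .
  show ?case
  proof (cases l)
    case Nil
    then show ?thesis using iid_len[of "[]" p "length (a#as)"]
      by (simp add: Xs_def vimage_def pmf_eq_0_set_pmf del: iid.simps) blast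
  next
    case (Cons x l')
    have "Xs X (a # as) -` {l} \<inter> space M = (\<lambda>\<omega>. ([X a \<omega>], Xs X as \<omega>)) -` ({[x]} \<times> {l'}) \<inter> space M"
      using Cons by (auto simp: Xs_def)
    moreover have "(\<lambda>\<omega>. [X a \<omega>]) -` {[x]} \<inter> space M = X a -` {x} \<inter> space M" by auto
    ultimately have "P.prob (Xs X (a # as) -` {l} \<inter> space M) = P.prob (X a -` {x} \<inter> space M) * P.prob (Xs X as -` {l'} \<inter> space M)"
      using P.indep_varD[OF ind3, of "{[x]}" "{l'}"] by simp
    also have "\<dots> = pmf p x * pmf (iid p (length as)) l'"
      using Cons.prems Cons.IH[of l'] prob_X_single[of a x] by simp
    also have "\<dots> = pmf (iid p (length (a # as))) l"
      using Cons by (simp add: pmf_iid_Cons del: iid.simps)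
    finally show ?thesis .
  qed
qed

lemma distr_Xs:
  assumes "distinct as" "set as \<subseteq> V"
  shows "distr M (count_space UNIV) (Xs X as) = measure_pmf (iid p (length as))"
proof (rule measure_eqI_countable[where A=UNIV])
  fix l :: "nat list"
  have "emeasure (distr M (count_space UNIV) (Xs X as)) {l} = emeasure M (Xs X as -` {l} \<inter> space M)"
    using Xs_meas[OF assms(2)] by (subst emeasure_distr) auto
  also have "\<dots> = ennreal (pmf (iid p (length as)) l)"
    using prob_Xs_single[OF assms, of l] by (simp add: P.emeasure_eq_measure)
  also have "\<dots> = emeasure (measure_pmf (iid p (length as))) {l}"
    by (simp add: emeasure_pmf_single)
  finally show "emeasure (distr M (count_space UNIV) (Xs X as)) {l} = emeasure (measure_pmf (iid p (length as))) {l}" .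
qed auto

lemma prob_Xs:
  assumes "distinct as" "set as \<subseteq> V"
  shows "P.prob {\<omega> \<in> space M. Xs X as \<omega> \<in> S} = measure_pmf.prob (iid p (length as)) S"
proof -
  have "P.prob {\<omega> \<in> space M. Xs X as \<omega> \<in> S} = measure (distr M (count_space UNIV) (Xs X as)) S"
    using Xs_meas[OF assms(2)] by (subst measure_distr) (auto simp: vimage_def Int_def conj_commute)
  then show ?thesis using distr_Xs[OF assms] by simp
qed

end


lemma length_concat_const: "(\<forall>x\<in>set ls. length x = n) \<Longrightarrow> length (concat ls) = length ls * n"
  by (induction ls) auto

lemma take_drop_concat:
  "(\<forall>x\<in>set ls. length x = n) \<Longrightarrow> q < length ls \<Longrightarrow> take n (drop (q * n) (concat ls)) = ls ! q"
proof (induction ls arbitrary: q)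
  case Nil
  then show ?case by simp
next
  case (Cons x ls)
  show ?case
  proof (cases q)
    case 0
    then show ?thesis using Cons.prems by simp
  next
    case (Suc q')
    have "drop (q * n) (concat (x # ls)) = drop (q' * n) (concat ls)"
      using Cons.prems Suc by (simp add: add.commute)
    then show ?thesis using Cons Suc by simp
  qed
qed

context tree_setup
begin

interpretation P: prob_space M by (rule ps)

lemma prob_blocks_M:
  assumes "\<forall>b\<in>set bl. length b = n" "distinct (concat bl)" "set (concat bl) \<subseteq> V"
  shows "P.prob {\<omega> \<in> space M. \<forall>q<length bl. cov (Xs X (bl ! q) \<omega>)} = pi_n p n ^ length bl"
proof -
  have eq: "Xs X (bl ! q) \<omega> = take n (drop (q * n) (Xs X (concat bl) \<omega>))" if "q < length bl" for q \<omega>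
  proof -
    have "Xs X (concat bl) \<omega> = concat (map (\<lambda>b. Xs X b \<omega>) bl)"
      by (simp add: Xs_def map_concat)
    moreover have "\<forall>x\<in>set (map (\<lambda>b. Xs X b \<omega>) bl). length x = n"
      using assms(1) by (auto simp: Xs_def)
    ultimately show ?thesis
      using take_drop_concat[of "map (\<lambda>b. Xs X b \<omega>) bl" n q] that by simp
  qed
  have "{\<omega> \<in> space M. \<forall>q<length bl. cov (Xs X (bl ! q) \<omega>)}
      = {\<omega> \<in> space M. Xs X (concat bl) \<omega> \<in> {r. \<forall>q<length bl. take n (drop (q * n) r) \<in> {rs. cov rs}}}"
    using eq by auto
  also have "P.prob \<dots> = measure_pmf.prob (iid p (length bl * n)) {r. \<forall>q<length bl. take n (drop (q * n) r) \<in> {rs. cov rs}}"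
    by (subst prob_Xs[OF assms(2,3)]) (simp add: length_concat_const[OF assms(1)])
  also have "\<dots> = pi_n p n ^ length bl"
    using prob_blocks[of p "length bl" n "{rs. cov rs}"] by (simp add: pi_n_def)
  finally show ?thesis .
qed

end

lemma take_ss: "v \<in> ss_verts c \<Longrightarrow> take i v \<in> ss_verts c"
  by (auto simp: ss_verts_def)

lemma infected_sub: "infected c Rv m \<subseteq> ss_verts c"
  by (induction m) (auto simp: ss_verts_def cone_def)

lemma infected_Suc_mono: "infected c Rv m \<subseteq> infected c Rv (Suc m)"
proof
  fix u assume u: "u \<in> infected c Rv m"
  then have "u \<in> ss_verts c" using infected_sub by blast
  then have "u \<in> cone c u (Rv u)" by (auto simp: cone_def tree_le_def)
  then show "u \<in> infected c Rv (Suc m)" using u by auto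
qed

lemma infected_mono: "m \<le> m' \<Longrightarrow> infected c Rv m \<subseteq> infected c Rv m'"
  by (induction m' rule: dec_induct) (use infected_Suc_mono in blast)+

definition blk :: "nat \<Rightarrow> nat list \<Rightarrow> nat \<Rightarrow> nat list list" where
  "blk n v b = map (\<lambda>i. take i v) [b * n..<b * n + n]"

lemma reach:
  assumes v: "v \<in> ss_verts c" "length v = t * n"
    and cv: "\<forall>b<t. cov (map Rv (blk n v b))"
  shows "i \<le> t * n \<Longrightarrow> take i v \<in> infected c Rv i"
proof (induction i rule: less_induct)
  case (less i)
  show ?case
  proof (cases i)
    case 0
    then show ?thesis by simp
  next
    case (Suc i0)
    have np: "0 < n" using less.prems Suc by (cases n) auto
    define b where "b = i0 div n"
    define k where "k = i0 mod n"
    have i0: "i0 = b * n + k" unfolding b_def k_def by simp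
    have kn: "k < n" unfolding k_def using np by simp
    have bt: "b < t"
    proof (rule ccontr)
      assume "\<not> b < t"
      then have "t * n \<le> b * n" by (simp add: mult_le_mono1)
      then show False using less.prems Suc i0 by linarith
    qed
    have "cov (map Rv (blk n v b))" using cv bt by blast
    then obtain j where j: "j \<le> k" "k + 1 \<le> j + map Rv (blk n v b) ! j"
      unfolding cov_def using kn by (auto simp: blk_def)
    have jn: "j < n" using j kn by simp
    define u where "u = take (b * n + j) v"
    have Ru: "map Rv (blk n v b) ! j = Rv u" using jn by (simp add: blk_def u_def)
    have "u \<in> infected c Rv (b * n + j)"
      unfolding u_def using less.prems Suc i0 j by (intro less.IH) auto
    then have uI: "u \<in> infected c Rv i0"
      using infected_mono[of "b * n + j" i0 c Rv] i0 j by auto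
    have w: "take i v \<in> cone c u (Rv u)"
    proof -
      have le: "b * n + j \<le> i" using Suc i0 j by simp
      have "take (b * n + j) (take i v) = u" unfolding u_def using le by (simp add: min_def)
      then have "take i v = u @ drop (b * n + j) (take i v)"
        using append_take_drop_id[of "b * n + j" "take i v"] by simp
      moreover have "length (take i v) - length u \<le> Rv u"
        using less.prems Suc i0 j Ru v(2) by (simp add: u_def)
      ultimately show ?thesis using take_ss[OF v(1)] by (auto simp: cone_def tree_le_def)
    qed
    show ?thesis using uI w Suc by auto
  qed
qed

lemma survive:
  assumes np: "0 < n"
    and H: "\<forall>t. \<exists>v. v \<in> ss_verts c \<and> length v = t * n \<and> (\<forall>b<t. cov (map Rv (blk n v b)))"
  shows "infinite (\<Union>m. infected c Rv m)"
proof
  assume fin: "finite (\<Union>m. infected c Rv m)"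
  define B where "B = Max (length ` (\<Union>m. infected c Rv m))"
  obtain v where v: "v \<in> ss_verts c" "length v = Suc B * n" "\<forall>b<Suc B. cov (map Rv (blk n v b))"
    using H by blast
  have "take (Suc B * n) v \<in> infected c Rv (Suc B * n)"
    by (rule reach[OF v(1,2,3)]) simp
  then have "v \<in> (\<Union>m. infected c Rv m)" using v(2) by auto
  then have "length v \<le> B" unfolding B_def using fin by (intro Max_ge) auto
  moreover have "Suc B * 1 \<le> Suc B * n" using np by (intro mult_le_mono2) simp
  ultimately show False using v(2) by simp
qed


lemma prod_lessThan_add: "(\<Prod>i<(a::nat) + b. f i) = (\<Prod>i<a. f i) * (\<Prod>j<b. f (a + j))"
  by (induction b) (simp_all add: ac_simps)

definition blists :: "(nat \<Rightarrow> nat) \<Rightarrow> nat \<Rightarrow> nat list set" where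
  "blists f l = {xs. length xs = l \<and> (\<forall>i<l. xs ! i < f i)}"

lemma blists_Suc: "blists f (Suc l) = (\<lambda>(xs, x). xs @ [x]) ` (blists f l \<times> {..<f l})"
proof (intro equalityI subsetI)
  fix ys assume "ys \<in> blists f (Suc l)"
  then have ys: "length ys = Suc l" "\<forall>i<Suc l. ys ! i < f i" by (auto simp: blists_def)
  then have "ys = butlast ys @ [last ys]"
    by (metis append_butlast_last_id length_0_conv nat.distinct(1))
  moreover have "butlast ys \<in> blists f l"
    using ys by (auto simp: blists_def nth_butlast)
  moreover have "last ys < f l"
    using ys by (metis diff_Suc_1 last_conv_nth length_0_conv lessI nat.distinct(1))
  ultimately show "ys \<in> (\<lambda>(xs, x). xs @ [x]) ` (blists f l \<times> {..<f l})"
    by (intro image_eqI[of _ _ "(butlast ys, last ys)"]) auto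
next
  fix ys assume "ys \<in> (\<lambda>(xs, x). xs @ [x]) ` (blists f l \<times> {..<f l})"
  then obtain xs x where "ys = xs @ [x]" "xs \<in> blists f l" "x < f l" by auto
  then show "ys \<in> blists f (Suc l)"
    by (auto simp: blists_def nth_append less_Suc_eq)
qed

lemma blists_card: "finite (blists f l) \<and> card (blists f l) = (\<Prod>i<l. f i)"
proof (induction l)
  case 0
  have "blists f 0 = {[]}" by (auto simp: blists_def)
  then show ?case by simp
next
  case (Suc l)
  have inj: "inj_on (\<lambda>(xs, x). xs @ [x]) (blists f l \<times> {..<f l})"
    by (auto simp: inj_on_def)
  show ?case unfolding blists_Suc using Suc
    by (simp add: card_image[OF inj] card_cartesian_product)
qed

definition lev :: "(nat \<Rightarrow> nat) \<Rightarrow> nat \<Rightarrow> nat list set" where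
  "lev c l = {v \<in> ss_verts c. length v = l}"

lemma lev_blists: "lev c l = blists c l"
  by (auto simp: lev_def ss_verts_def blists_def)

lemma fiber_eq:
  assumes u: "u \<in> ss_verts c" "length u = a"
  shows "{w \<in> ss_verts c. length w = a + b \<and> take a w = u} = (\<lambda>z. u @ z) ` blists (\<lambda>j. c (a + j)) b"
proof (intro equalityI subsetI)
  fix w assume w: "w \<in> {w \<in> ss_verts c. length w = a + b \<and> take a w = u}"
  then have "w = u @ drop a w" by (metis (mono_tags, lifting) append_take_drop_id mem_Collect_eq)
  moreover have "drop a w \<in> blists (\<lambda>j. c (a + j)) b"
    using w by (auto simp: blists_def ss_verts_def)
  ultimately show "w \<in> (\<lambda>z. u @ z) ` blists (\<lambda>j. c (a + j)) b" by blast
next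
  fix w assume "w \<in> (\<lambda>z. u @ z) ` blists (\<lambda>j. c (a + j)) b"
  then obtain z where z: "w = u @ z" "length z = b" "\<forall>i<b. z ! i < c (a + i)"
    by (auto simp: blists_def)
  have "\<forall>i<length w. w ! i < c i"
  proof (intro allI impI)
    fix i assume "i < length w"
    show "w ! i < c i"
    proof (cases "i < a")
      case True
      then show ?thesis using z u by (auto simp: nth_append ss_verts_def)
    next
      case False
      then have "i - a < b" using \<open>i < length w\<close> z u by auto
      then have "z ! (i - a) < c (a + (i - a))" using z by blast
      then show ?thesis using False z u by (simp add: nth_append)
    qed
  qed
  then show "w \<in> {w \<in> ss_verts c. length w = a + b \<and> take a w = u}"
    using z u by (auto simp: ss_verts_def)
qed

lemma fiber_card:
  assumes u: "u \<in> ss_verts c" "length u = a"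
  shows "finite {w \<in> ss_verts c. length w = a + b \<and> take a w = u}"
    "card {w \<in> ss_verts c. length w = a + b \<and> take a w = u} = (\<Prod>j<b. c (a + j))"
proof -
  have inj: "inj_on (\<lambda>z. u @ z) (blists (\<lambda>j. c (a + j)) b)" by (auto simp: inj_on_def)
  show "finite {w \<in> ss_verts c. length w = a + b \<and> take a w = u}"
    unfolding fiber_eq[OF u] using blists_card by blast
  show "card {w \<in> ss_verts c. length w = a + b \<and> take a w = u} = (\<Prod>j<b. c (a + j))"
    unfolding fiber_eq[OF u] using blists_card by (simp add: card_image[OF inj])
qed

lemma Mn_eq: "u \<in> ss_verts c \<Longrightarrow> Mn c n u = (\<Prod>j<n. c (length u + j))"
proof -
  assume u: "u \<in> ss_verts c"
  have "{v \<in> ss_verts c. tree_le u v \<and> length v = length u + n}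
      = {w \<in> ss_verts c. length w = length u + n \<and> take (length u) w = u}"
    by (auto simp: tree_le_def) (metis append_take_drop_id)
  then show ?thesis unfolding Mn_def using fiber_card[OF u refl] by simp
qed

lemma (in prob_space) second_moment:
  fixes E :: "'i \<Rightarrow> 'a set"
  assumes F: "finite F" and E: "\<And>v. v \<in> F \<Longrightarrow> E v \<in> events"
    and pos: "0 < (\<Sum>v\<in>F. prob (E v))"
  shows "(\<Sum>v\<in>F. prob (E v))^2 \<le> prob (\<Union>v\<in>F. E v) * (\<Sum>v\<in>F. \<Sum>w\<in>F. prob (E v \<inter> E w))"
proof -
  define S1 where "S1 = (\<Sum>v\<in>F. prob (E v))"
  define S2 where "S2 = (\<Sum>v\<in>F. \<Sum>w\<in>F. prob (E v \<inter> E w))"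
  define U where "U = (\<Union>v\<in>F. E v)"
  have U: "U \<in> events" unfolding U_def using F E by auto
  have PU: "0 < prob U"
  proof (rule ccontr)
    assume "\<not> 0 < prob U"
    then have "prob U = 0" using measure_nonneg[of M U] by simp
    then have "prob (E v) = 0" if "v \<in> F" for v
      using finite_measure_mono[of "E v" U] U that measure_nonneg[of M "E v"] by (auto simp: U_def)
    then show False using pos by simp
  qed
  define a where "a = S1 / prob U"
  define W where "W x = (\<Sum>v\<in>F. indicator (E v) x :: real)" for x
  have pt: "(W x - a * indicator U x)^2
      = (\<Sum>v\<in>F. \<Sum>w\<in>F. indicator (E v \<inter> E w) x) - 2 * a * (\<Sum>v\<in>F. indicator (E v) x) + a^2 * indicator U x" for x
  proof (cases "x \<in> U")
    case True
    have "(\<Sum>v\<in>F. \<Sum>w\<in>F. indicator (E v \<inter> E w) x :: real) = W x * W x"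
      unfolding W_def sum_product by (simp add: indicator_inter_arith)
    then show ?thesis using True by (simp add: W_def power2_eq_square algebra_simps)
  next
    case False
    then have "x \<notin> E v" if "v \<in> F" for v using that by (auto simp: U_def)
    then show ?thesis using False by (simp add: W_def indicator_def)
  qed
  have int1: "integrable M (indicator A :: 'a \<Rightarrow> real)" if "A \<in> events" for A
    using that by (intro integrable_real_indicator) (auto simp: emeasure_eq_measure)
  have "0 \<le> expectation (\<lambda>x. (W x - a * indicator U x)^2)"
    by (rule integral_nonneg_AE) simp
  also have "\<dots> = expectation (\<lambda>x. (\<Sum>v\<in>F. \<Sum>w\<in>F. indicator (E v \<inter> E w) x) - 2 * a * (\<Sum>v\<in>F. indicator (E v) x) + a^2 * indicator U x)"
    by (simp add: pt)
  also have "\<dots> = S2 - 2 * a * S1 + a^2 * prob U"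
    using F E U
    by (simp add: S1_def S2_def int1 integrable_sum Bochner_Integration.integral_sum
                  Bochner_Integration.integral_diff Bochner_Integration.integral_add)
  finally have "0 \<le> S2 - 2 * a * S1 + a^2 * prob U" .
  also have "S2 - 2 * a * S1 + a^2 * prob U = S2 - S1^2 / prob U"
    using PU by (simp add: a_def power2_eq_square field_simps)
  finally have "S1^2 / prob U \<le> S2" by simp
  then have "S1^2 \<le> S2 * prob U" using PU by (simp add: divide_le_eq)
  then show ?thesis by (simp add: S1_def S2_def U_def mult.commute)
qed


definition Ev :: "'a measure \<Rightarrow> (nat list \<Rightarrow> 'a \<Rightarrow> nat) \<Rightarrow> nat \<Rightarrow> nat \<Rightarrow> nat list \<Rightarrow> 'a set" where
  "Ev M X n t v = {\<omega> \<in> space M. \<forall>b<t. cov (Xs X (blk n v b) \<omega>)}"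

lemma concat_blk: "a \<le> t \<Longrightarrow> concat (map (blk n v) [a..<t]) = map (\<lambda>i. take i v) [a * n..<t * n]"
proof (induction t)
  case 0
  then show ?case by simp
next
  case (Suc t)
  show ?case
  proof (cases "a = Suc t")
    case True
    then show ?thesis by simp
  next
    case False
    then have "a \<le> t" using Suc by simp
    then have "concat (map (blk n v) [a..<Suc t]) = map (\<lambda>i. take i v) [a * n..<t * n] @ blk n v t"
      using Suc by simp
    also have "\<dots> = map (\<lambda>i. take i v) [a * n..<Suc t * n]"
    proof -
      have "[a * n..<t * n + n] = [a * n..<t * n] @ [t * n..<t * n + n]"
        by (rule upt_add_eq_append) (simp add: mult_le_mono1 \<open>a \<le> t\<close>)
      then show ?thesis by (simp add: blk_def add.commute)
    qed
    finally show ?thesis .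
  qed
qed

lemma length_blk: "length (blk n v b) = n" by (simp add: blk_def)

lemma nth_blk: "j < n \<Longrightarrow> blk n v b ! j = take (b * n + j) v" by (simp add: blk_def)

locale tree2 = tree_setup M "ss_verts c" X p for M :: "'a measure" and c and X and p
begin

interpretation P: prob_space M by (rule ps)

lemma Ev_sets: "v \<in> ss_verts c \<Longrightarrow> Ev M X n t v \<in> sets M"
proof -
  assume v: "v \<in> ss_verts c"
  have "Measurable.pred M (\<lambda>\<omega>. cov (Xs X (blk n v b) \<omega>))" for b
  proof -
    have "set (blk n v b) \<subseteq> ss_verts c" using take_ss[OF v] by (auto simp: blk_def)
    then have "Xs X (blk n v b) \<in> measurable M (count_space UNIV)" by (rule Xs_meas)
    from measurable_compose[OF this measurable_count_space, of cov] show ?thesis .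
  qed
  then have "Measurable.pred M (\<lambda>\<omega>. \<forall>b. b < t \<longrightarrow> cov (Xs X (blk n v b) \<omega>))"
    by (intro pred_intros_countable(1) pred_intros_imp') blast
  then show ?thesis unfolding Ev_def by (rule pred_def[THEN iffD1])
qed

lemma distinct_takes: "b \<le> length v \<Longrightarrow> distinct (map (\<lambda>i. take i v) [a..<b])"
proof -
  assume b: "b \<le> length v"
  have "inj_on (\<lambda>i. take i v) {a..<b}"
  proof (rule inj_onI)
    fix x y assume "x \<in> {a..<b}" "y \<in> {a..<b}" "take x v = take y v"
    then have "length (take x v) = length (take y v)" "x < b" "y < b" by auto
    then show "x = y" using b by simp
  qed
  then show ?thesis by (simp add: distinct_map)
qed

lemma prob_Ev:
  assumes v: "v \<in> lev c (t * n)"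
  shows "P.prob (Ev M X n t v) = pi_n p n ^ t"
proof -
  define bl where "bl = map (blk n v) [0..<t]"
  have cc: "concat bl = map (\<lambda>i. take i v) [0..<t * n]"
    unfolding bl_def using concat_blk[of 0 t n v] by simp
  have "P.prob {\<omega> \<in> space M. \<forall>q<length bl. cov (Xs X (bl ! q) \<omega>)} = pi_n p n ^ length bl"
  proof (rule prob_blocks_M)
    show "\<forall>b\<in>set bl. length b = n" by (auto simp: bl_def length_blk)
    show "distinct (concat bl)" unfolding cc using v by (intro distinct_takes) (simp add: lev_def)
    show "set (concat bl) \<subseteq> ss_verts c" unfolding cc using v take_ss by (auto simp: lev_def)
  qed
  moreover have "{\<omega> \<in> space M. \<forall>q<length bl. cov (Xs X (bl ! q) \<omega>)} = Ev M X n t v"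
    by (auto simp: bl_def Ev_def)
  ultimately show ?thesis by (simp add: bl_def)
qed

lemma prob_pair:
  assumes v: "v \<in> lev c (t * n)" and w: "w \<in> lev c (t * n)" and s: "s < t"
    and agree: "take (s * n) v = take (s * n) w"
    and dis: "take (Suc s * n) v \<noteq> take (Suc s * n) w"
  shows "P.prob (Ev M X n t v \<inter> Ev M X n t w) \<le> pi_n p n ^ (t + (t - Suc s))"
proof -
  define bl where "bl = map (blk n v) [0..<t] @ map (blk n w) [Suc s..<t]"
  have lv: "length v = t * n" "v \<in> ss_verts c" using v by (auto simp: lev_def)
  have lw: "length w = t * n" "w \<in> ss_verts c" using w by (auto simp: lev_def)
  have cc: "concat bl = map (\<lambda>i. take i v) [0..<t * n] @ map (\<lambda>i. take i w) [Suc s * n..<t * n]"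
    unfolding bl_def using concat_blk[of 0 t n v] concat_blk[of "Suc s" t n w] s by simp
  have len: "length bl = t + (t - Suc s)" by (simp add: bl_def)
  have ev: "{\<omega> \<in> space M. \<forall>q<length bl. cov (Xs X (bl ! q) \<omega>)} \<in> sets M"
  proof -
    have "Measurable.pred M (\<lambda>\<omega>. cov (Xs X (bl ! q) \<omega>))" if "q < length bl" for q
    proof -
      have "set (bl ! q) \<subseteq> set (concat bl)" using that nth_mem by fastforce
      also have "\<dots> \<subseteq> ss_verts c" unfolding cc using lv lw take_ss by auto
      finally have "Xs X (bl ! q) \<in> measurable M (count_space UNIV)" by (rule Xs_meas)
      from measurable_compose[OF this measurable_count_space, of cov] show ?thesis .
    qed
    then have "Measurable.pred M (\<lambda>\<omega>. \<forall>q. q < length bl \<longrightarrow> cov (Xs X (bl ! q) \<omega>))"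
      by (intro pred_intros_countable(1) pred_intros_imp') blast
    then show ?thesis by (rule pred_def[THEN iffD1])
  qed
  have "P.prob (Ev M X n t v \<inter> Ev M X n t w) \<le> P.prob {\<omega> \<in> space M. \<forall>q<length bl. cov (Xs X (bl ! q) \<omega>)}"
  proof (rule P.finite_measure_mono[OF _ ev])
    show "Ev M X n t v \<inter> Ev M X n t w \<subseteq> {\<omega> \<in> space M. \<forall>q<length bl. cov (Xs X (bl ! q) \<omega>)}"
    proof safe
      fix \<omega> q assume a: "\<omega> \<in> Ev M X n t v" "\<omega> \<in> Ev M X n t w" "q < length bl"
      show "cov (Xs X (bl ! q) \<omega>)"
      proof (cases "q < t")
        case True
        then show ?thesis using a by (simp add: bl_def nth_append Ev_def)
      next
        case False
        then have "bl ! q = blk n w (Suc s + (q - t))" using a(3) s by (simp add: bl_def nth_append)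
        moreover have "Suc s + (q - t) < t" using a(3) False len by simp
        ultimately show ?thesis using a(2) by (simp add: Ev_def)
      qed
    next
      fix \<omega> assume "\<omega> \<in> Ev M X n t v" then show "\<omega> \<in> space M" by (simp add: Ev_def)
    qed
  qed
  also have "\<dots> = pi_n p n ^ length bl"
  proof (rule prob_blocks_M)
    show "\<forall>b\<in>set bl. length b = n" by (auto simp: bl_def length_blk)
    show "set (concat bl) \<subseteq> ss_verts c" unfolding cc using lv lw take_ss by auto
    show "distinct (concat bl)" unfolding cc distinct_append
    proof (intro conjI)
      show "distinct (map (\<lambda>i. take i v) [0..<t * n])" using lv by (intro distinct_takes) simp
      show "distinct (map (\<lambda>i. take i w) [Suc s * n..<t * n])" using lw by (intro distinct_takes) simp
      show "set (map (\<lambda>i. take i v) [0..<t * n]) \<inter> set (map (\<lambda>i. take i w) [Suc s * n..<t * n]) = {}"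
      proof (rule ccontr)
        assume "\<not> ?thesis"
        then obtain i j where ij: "i < t * n" "Suc s * n \<le> j" "j < t * n" "take i v = take j w" by auto
        then have "i = j" using lv lw by (metis length_take min.absorb4 min_def nat_less_le)
        then have "take (Suc s * n) (take i v) = take (Suc s * n) (take j w)" using ij by simp
        then show False using ij \<open>i = j\<close> dis by (simp add: min_def)
      qed
    qed
  qed
  finally show ?thesis using len by simp
qed

lemma Ev_mono:
  assumes v: "v \<in> lev c (Suc t * n)"
  shows "take (t * n) v \<in> lev c (t * n)" "Ev M X n (Suc t) v \<subseteq> Ev M X n t (take (t * n) v)"
proof -
  show "take (t * n) v \<in> lev c (t * n)" using v take_ss by (auto simp: lev_def)
  have "blk n (take (t * n) v) b = blk n v b" if "b < t" for b
  proof -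
    have "b * n + n \<le> t * n" using that by (metis add.commute mult_Suc mult_le_mono1 Suc_leI)
    then show ?thesis by (auto simp: blk_def min_def)
  qed
  then show "Ev M X n (Suc t) v \<subseteq> Ev M X n t (take (t * n) v)"
    by (auto simp: Ev_def)
qed

lemma pred_infected: "Measurable.pred M (\<lambda>\<omega>. u \<in> infected c (\<lambda>v. X v \<omega>) m)"
proof (induction m arbitrary: u)
  case 0
  have "Measurable.pred M (\<lambda>\<omega>. u = [])" by (rule measurable_const) simp
  then show ?case by simp
next
  case (Suc m)
  have eq: "(u \<in> infected c (\<lambda>v. X v \<omega>) (Suc m)) \<longleftrightarrow>
     (\<exists>w. w \<in> ss_verts c \<and> w \<in> infected c (\<lambda>v. X v \<omega>) m \<and> u \<in> cone c w (X w \<omega>))" for \<omega>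
    using infected_sub[of c "(\<lambda>v. X v \<omega>)" m] by fastforce
  have "Measurable.pred M (\<lambda>\<omega>. w \<in> ss_verts c \<and> w \<in> infected c (\<lambda>v. X v \<omega>) m \<and> u \<in> cone c w (X w \<omega>))" for w
  proof (cases "w \<in> ss_verts c")
    case True
    have Xw: "X w \<in> measurable M (count_space UNIV)" using meas True by blast
    from measurable_compose[OF Xw measurable_count_space, of "\<lambda>r. u \<in> cone c w r"]
    have "Measurable.pred M (\<lambda>\<omega>. u \<in> cone c w (X w \<omega>))" .
    from pred_intros_logic(3)[OF Suc.IH[of w] this]
    have "Measurable.pred M (\<lambda>\<omega>. w \<in> infected c (\<lambda>v. X v \<omega>) m \<and> u \<in> cone c w (X w \<omega>))" .
    then show ?thesis using True by simp
  next
    case False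
    then show ?thesis by (simp add: measurable_const)
  qed
  then have "Measurable.pred M (\<lambda>\<omega>. \<exists>w. w \<in> ss_verts c \<and> w \<in> infected c (\<lambda>v. X v \<omega>) m \<and> u \<in> cone c w (X w \<omega>))"
    by (rule pred_intros_countable(2))
  then show ?case unfolding eq .
qed

lemma infinite_iff_to_nat: "infinite (S :: nat list set) \<longleftrightarrow> (\<forall>N. \<exists>v. v \<in> S \<and> N \<le> to_nat v)"
proof
  assume inf: "infinite S"
  show "\<forall>N. \<exists>v. v \<in> S \<and> N \<le> to_nat v"
  proof (rule ccontr)
    assume "\<not> ?thesis"
    then obtain N where "\<forall>v\<in>S. to_nat v < N" by (auto simp: not_le)
    then have "to_nat ` S \<subseteq> {..<N}" by auto
    then have "finite (to_nat ` S)" by (rule finite_subset) simp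
    then have "finite S" using finite_imageD inj_on_to_nat by (metis inj_to_nat inj_on_subset subset_UNIV)
    then show False using inf by simp
  qed
next
  assume H: "\<forall>N. \<exists>v. v \<in> S \<and> N \<le> to_nat v"
  show "infinite S"
  proof
    assume "finite S"
    then obtain N where "\<forall>v\<in>S. to_nat v < N"
      by (metis finite_imageI finite_nat_set_iff_bounded imageI)
    then show False using H by (meson not_le)
  qed
qed

lemma surv_sets: "{\<omega> \<in> space M. infinite (\<Union>m. infected c (\<lambda>v. X v \<omega>) m)} \<in> sets M"
proof -
  have "Measurable.pred M (\<lambda>\<omega>. \<forall>N. \<exists>v. (\<exists>m. v \<in> infected c (\<lambda>v. X v \<omega>) m) \<and> N \<le> to_nat v)"
    by (intro pred_intros_countable pred_intros_conj2' pred_infected)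
  moreover have "(\<lambda>\<omega>. infinite (\<Union>m. infected c (\<lambda>v. X v \<omega>) m)) = (\<lambda>\<omega>. \<forall>N. \<exists>v. (\<exists>m. v \<in> infected c (\<lambda>v. X v \<omega>) m) \<and> N \<le> to_nat v)"
    by (auto simp: infinite_iff_to_nat)
  ultimately have "Measurable.pred M (\<lambda>\<omega>. infinite (\<Union>m. infected c (\<lambda>v. X v \<omega>) m))" by simp
  then show ?thesis by (simp add: pred_def)
qed

end


lemma arith_bound:
  fixes \<pi> m N :: real and Q Ns :: "nat \<Rightarrow> real" and t :: nat
  assumes pi: "0 < \<pi>" and m: "1 < m" and Nt: "1 \<le> N * \<pi> ^ t"
    and NQ: "\<And>s. s < t \<Longrightarrow> N = Ns s * Q s"
    and Ns: "\<And>s. s < t \<Longrightarrow> m ^ s \<le> Ns s * \<pi> ^ s"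
    and Q: "\<And>s. 0 \<le> Q s"
  shows "\<pi> ^ t + (\<Sum>s<t. \<pi> ^ (t + (t - Suc s)) * Q s) \<le> (1 + 1 / (\<pi> * (1 - 1 / m))) * (N * \<pi> ^ (2 * t))"
proof -
  define A where "A = N * \<pi> ^ (2 * t)"
  have Aeq: "A = (N * \<pi> ^ t) * \<pi> ^ t" unfolding A_def by (simp add: mult_2 power_add)
  have Apos: "0 \<le> A" unfolding Aeq using Nt pi by simp
  have h1: "\<pi> ^ t \<le> A"
  proof -
    have "\<pi> ^ t * 1 \<le> \<pi> ^ t * (N * \<pi> ^ t)" using Nt pi by (intro mult_left_mono) auto
    also have "\<dots> = A" unfolding Aeq by simp
    finally show ?thesis by simp
  qed
  have h2: "\<pi> ^ (t + (t - Suc s)) * Q s \<le> A * (1 / \<pi>) * (1 / m) ^ s" if s: "s < t" for s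
  proof -
    have mpos: "0 < m ^ s" using m by simp
    have e: "\<pi> ^ (t + (t - Suc s)) * \<pi> ^ Suc s = \<pi> ^ (2 * t)"
    proof -
      have "\<pi> ^ (t + (t - Suc s)) * \<pi> ^ Suc s = \<pi> ^ (t + (t - Suc s) + Suc s)" by (rule power_add[symmetric])
      also have "t + (t - Suc s) + Suc s = 2 * t" using s by simp
      finally show ?thesis .
    qed
    have "\<pi> ^ (t + (t - Suc s)) * Q s * (\<pi> * m ^ s) \<le> \<pi> ^ (t + (t - Suc s)) * Q s * (\<pi> * (Ns s * \<pi> ^ s))"
      using Ns[OF s] pi Q[of s] by (intro mult_left_mono) auto
    also have "\<dots> = (\<pi> ^ (t + (t - Suc s)) * \<pi> ^ Suc s) * (Ns s * Q s)" by (simp add: algebra_simps)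
    also have "\<dots> = A" unfolding e A_def NQ[OF s] by simp
    finally have "\<pi> ^ (t + (t - Suc s)) * Q s * (\<pi> * m ^ s) \<le> A" .
    then have "\<pi> ^ (t + (t - Suc s)) * Q s \<le> A / (\<pi> * m ^ s)" using pi mpos by (simp add: le_divide_eq)
    then show ?thesis by (simp add: power_one_over)
  qed
  have gs: "(\<Sum>s<t. (1 / m) ^ s) \<le> 1 / (1 - 1 / m)"
  proof -
    have x: "0 \<le> 1 / m" "1 / m < 1" using m by auto
    have "(\<Sum>s<t. (1 / m) ^ s) = (1 - (1 / m) ^ t) / (1 - 1 / m)"
      using x by (subst sum_gp_strict) auto
    also have "\<dots> \<le> 1 / (1 - 1 / m)"
      using x by (intro divide_right_mono) auto
    finally show ?thesis .
  qed
  have "(\<Sum>s<t. \<pi> ^ (t + (t - Suc s)) * Q s) \<le> (\<Sum>s<t. A * (1 / \<pi>) * (1 / m) ^ s)"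
    by (rule sum_mono) (rule h2, simp)
  also have "\<dots> = A * (1 / \<pi>) * (\<Sum>s<t. (1 / m) ^ s)" by (simp add: sum_distrib_left)
  also have "\<dots> \<le> A * (1 / \<pi>) * (1 / (1 - 1 / m))"
    using gs Apos pi by (intro mult_left_mono) auto
  finally have "\<pi> ^ t + (\<Sum>s<t. \<pi> ^ (t + (t - Suc s)) * Q s) \<le> A + A * (1 / \<pi>) * (1 / (1 - 1 / m))"
    using h1 by simp
  also have "\<dots> = (1 + 1 / (\<pi> * (1 - 1 / m))) * A" by (simp add: algebra_simps)
  finally show ?thesis by (simp add: A_def)
qed


lemma ln_nat_nonneg: "0 \<le> ln (real (k::nat))"
  by (cases k) auto

lemma rho_bounds: "0 \<le> rho p k \<and> rho p k \<le> 1"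
proof -
  have f: "0 \<le> 1 - (\<Prod>i\<le>j. measure_pmf.prob p {x. x < i + 1}) \<and> 1 - (\<Prod>i\<le>j. measure_pmf.prob p {x. x < i + 1}) \<le> 1" for j
  proof -
    have "0 \<le> (\<Prod>i\<le>j. measure_pmf.prob p {x. x < i + 1})" by (intro prod_nonneg) auto
    moreover have "(\<Prod>i\<le>j. measure_pmf.prob p {x. x < i + 1}) \<le> 1" by (intro prod_le_1) auto
    ultimately show ?thesis by simp
  qed
  show ?thesis unfolding rho_def using f by (auto intro!: prod_nonneg prod_le_1)
qed

theorem theorem5:
  fixes c :: "nat \<Rightarrow> nat" and p :: "nat pmf" and M :: "'a measure"
    and X :: "nat list \<Rightarrow> 'a \<Rightarrow> nat" and D L :: real
  assumes p0: "0 < pmf p 0" "pmf p 0 < 1"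
    and ps: "prob_space M"
    and meas: "\<forall>v\<in>ss_verts c. X v \<in> measurable M (count_space UNIV)"
    and indep: "prob_space.indep_vars M (\<lambda>_. count_space UNIV) X (ss_verts c)"
    and law: "\<forall>v\<in>ss_verts c. distr M (count_space UNIV) (X v) = measure_pmf p"
    and dim: "(\<lambda>n. (INF v\<in>ss_verts c. ln (real (Mn c n v))) / real n) \<longlonglongrightarrow> D"
    and rho_lim: "(\<lambda>n. root n (rho p n)) \<longlonglongrightarrow> L"
    and gt: "L > exp (- D)"
  shows "measure M {\<omega> \<in> space M. infinite (\<Union>n. infected c (\<lambda>v. X v \<omega>) n)} > 0"
proof -
  interpret P: prob_space M by (rule ps)
  interpret T: tree2 M c X p by unfold_locales (use ps meas indep law in auto)
  have L1: "L \<le> 1"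
  proof (rule LIMSEQ_le_const2[OF rho_lim])
    show "\<exists>N. \<forall>n\<ge>N. root n (rho p n) \<le> 1"
      using rho_bounds by (intro exI[of _ 1]) auto
  qed
  have Lpos: "0 < L" using gt exp_gt_zero[of "- D"] by linarith
  have Dpos: "0 < D"
  proof -
    have "exp (- D) < 1" using gt L1 by (rule order.strict_trans2)
    then show ?thesis by simp
  qed
  define a where "a = ln L + D"
  have apos: "0 < a"
  proof -
    have "exp (- D) < exp (ln L)" using gt Lpos by simp
    then show ?thesis unfolding a_def by simp
  qed
  have lnL: "ln L \<le> 0" using L1 Lpos by simp
  define \<beta> where "\<beta> = exp (ln L - a / 3)"
  define \<gamma> where "\<gamma> = exp (D - a / 3)"
  have bpos: "0 < \<beta>" unfolding \<beta>_def by simp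
  have bL: "\<beta> < L"
  proof -
    have "exp (ln L - a / 3) < exp (ln L)" using apos by simp
    then show ?thesis unfolding \<beta>_def using Lpos by simp
  qed
  have g1: "1 < \<gamma>" unfolding \<gamma>_def using apos Dpos lnL by (simp add: a_def)
  have bg: "1 < \<beta> * \<gamma>" unfolding \<beta>_def \<gamma>_def using apos by (simp add: exp_add[symmetric] a_def)
  have lng: "ln \<gamma> < D" unfolding \<gamma>_def using apos by simp
  have E1: "eventually (\<lambda>n. \<beta> < root n (rho p n)) sequentially"
    by (rule order_tendstoD(1)[OF rho_lim bL])
  have E2: "eventually (\<lambda>n. ln \<gamma> < (INF v\<in>ss_verts c. ln (real (Mn c n v))) / real n) sequentially"
    by (rule order_tendstoD(1)[OF dim lng])
  have E3: "eventually (\<lambda>n. 1 \<le> n) sequentially" by (rule eventually_ge_at_top)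
  obtain n where n1: "\<beta> < root n (rho p n)"
      and n2: "ln \<gamma> < (INF v\<in>ss_verts c. ln (real (Mn c n v))) / real n" and n3: "1 \<le> n"
    using eventually_happens'[OF _ eventually_conj[OF E1 eventually_conj[OF E2 E3]]] by auto
  have npos: "0 < n" using n3 by simp
  define \<pi> where "\<pi> = pi_n p n"
  have rho_gt: "\<beta> ^ n < rho p n"
  proof -
    have "\<beta> ^ n < root n (rho p n) ^ n" using n1 bpos npos by (intro power_strict_mono) auto
    also have "\<dots> = rho p n" using npos rho_bounds by (simp add: real_root_pow_pos2)
    finally show ?thesis .
  qed
  have pi_gt: "\<beta> ^ n < \<pi>" unfolding \<pi>_def using rho_gt rho_le_pi[of p n] by simp
  have pipos: "0 < \<pi>"
  proof -
    have "0 < \<beta> ^ n" using bpos by simp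
    then show ?thesis using pi_gt by linarith
  qed
  have Mgt: "\<gamma> ^ n < real (Mn c n v)" if v: "v \<in> ss_verts c" for v
  proof -
    have bdd: "bdd_below ((\<lambda>v. ln (real (Mn c n v))) ` ss_verts c)"
      by (rule bdd_belowI[of _ 0]) (auto simp: ln_nat_nonneg)
    have "(INF v\<in>ss_verts c. ln (real (Mn c n v))) \<le> ln (real (Mn c n v))"
      by (rule cINF_lower[OF bdd v])
    moreover have "real n * ln \<gamma> < (INF v\<in>ss_verts c. ln (real (Mn c n v)))"
      using n2 npos by (simp add: less_divide_eq mult.commute)
    ultimately have lt: "ln (\<gamma> ^ n) < ln (real (Mn c n v))"
      using g1 by (simp add: ln_realpow)
    have "0 < ln (\<gamma> ^ n)" using g1 npos by simp
    then have "0 < Mn c n v" using lt by (cases "Mn c n v") auto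
    then show ?thesis using lt g1 by simp
  qed
  have gnpos: "0 < \<gamma> ^ n" using g1 by simp
  have cpos: "0 < c i" for i
  proof (induction i rule: less_induct)
    case (less i)
    have rv: "replicate i 0 \<in> ss_verts c" using less by (auto simp: ss_verts_def)
    have "0 < real (Mn c n (replicate i 0))" using Mgt[OF rv] gnpos by linarith
    then have nz: "Mn c n (replicate i 0) \<noteq> 0" by simp
    show ?case
    proof (rule ccontr)
      assume "\<not> 0 < c i"
      then have "c (i + 0) = 0" by simp
      then have "(\<Prod>j<n. c (i + j)) = 0" using npos by (intro prod_zero bexI[of _ 0]) auto
      then show False using nz Mn_eq[OF rv] by simp
    qed
  qed
  have blockprod: "\<gamma> ^ n < real (\<Prod>j<n. c (d + j))" for d
  proof -
    have rv: "replicate d 0 \<in> ss_verts c" using cpos by (auto simp: ss_verts_def)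
    show ?thesis using Mgt[OF rv] Mn_eq[OF rv] by simp
  qed
  have Nbound: "(\<gamma> ^ n) ^ s \<le> real (\<Prod>i<s * n. c i)" for s
  proof (induction s)
    case 0
    then show ?case by simp
  next
    case (Suc s)
    have "(\<gamma> ^ n) ^ Suc s = (\<gamma> ^ n) ^ s * \<gamma> ^ n" by simp
    also have "\<dots> \<le> real (\<Prod>i<s * n. c i) * real (\<Prod>j<n. c (s * n + j))"
      using Suc blockprod[of "s * n"] gnpos by (intro mult_mono) (auto intro: prod_nonneg)
    also have "\<dots> = real (\<Prod>i<Suc s * n. c i)"
    proof -
      have "(\<Prod>i<Suc s * n. c i) = (\<Prod>i<s * n + n. c i)" by (simp add: add.commute)
      also have "\<dots> = (\<Prod>i<s * n. c i) * (\<Prod>j<n. c (s * n + j))" by (rule prod_lessThan_add)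
      finally show ?thesis by simp
    qed
    finally show ?case .
  qed
  define m where "m = \<gamma> ^ n * \<pi>"
  have m1: "1 < m"
  proof -
    have "1 < (\<beta> * \<gamma>) ^ n" using bg npos by (simp add: one_less_power)
    also have "\<dots> = \<gamma> ^ n * \<beta> ^ n" by (simp add: power_mult_distrib)
    also have "\<dots> \<le> m" unfolding m_def using pi_gt gnpos by (intro mult_left_mono) auto
    finally show ?thesis .
  qed
  have Npi: "m ^ s \<le> real (\<Prod>i<s * n. c i) * \<pi> ^ s" for s
  proof -
    have "m ^ s = (\<gamma> ^ n) ^ s * \<pi> ^ s" by (simp add: m_def power_mult_distrib)
    also have "\<dots> \<le> real (\<Prod>i<s * n. c i) * \<pi> ^ s"
      using Nbound[of s] pipos by (intro mult_right_mono) auto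
    finally show ?thesis .
  qed
  define C where "C = 1 + 1 / (\<pi> * (1 - 1 / m))"
  have Cpos: "0 < C"
  proof -
    have "0 < 1 - 1 / m" using m1 by simp
    then have "0 < 1 / (\<pi> * (1 - 1 / m))" using pipos by simp
    then show ?thesis unfolding C_def by linarith
  qed
  define U where "U t = (\<Union>v\<in>lev c (t * n). Ev M X n t v)" for t
  have finlev: "finite (lev c l)" "card (lev c l) = (\<Prod>i<l. c i)" for l
    using blists_card[of c l] by (simp_all add: lev_blists)
  have levss: "v \<in> ss_verts c" if "v \<in> lev c l" for v l using that by (simp add: lev_def)
  have Usets: "U t \<in> sets M" for t
    unfolding U_def using finlev(1) T.Ev_sets levss by (intro sets.finite_UN) auto
  have Ubound: "1 / C \<le> P.prob (U t)" for t
  proof -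
    define F where "F = lev c (t * n)"
    define N where "N = real (\<Prod>i<t * n. c i)"
    have N0: "0 \<le> N" unfolding N_def by (rule of_nat_0_le_iff)
    have cardF: "real (card F) = N" unfolding F_def N_def using finlev by simp
    have Nt: "1 \<le> N * \<pi> ^ t"
    proof -
      have "1 \<le> m ^ t" using m1 by simp
      then show ?thesis using Npi[of t] by (simp add: N_def)
    qed
    define Q where "Q s = real (\<Prod>j<t * n - s * n. c (s * n + j))" for s
    have S1: "(\<Sum>v\<in>F. P.prob (Ev M X n t v)) = N * \<pi> ^ t"
    proof -
      have "(\<Sum>v\<in>F. P.prob (Ev M X n t v)) = (\<Sum>v\<in>F. \<pi> ^ t)"
        unfolding F_def \<pi>_def by (intro sum.cong refl T.prob_Ev)
      then show ?thesis using cardF by simp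
    qed
    have S1pos: "0 < (\<Sum>v\<in>F. P.prob (Ev M X n t v))"
      unfolding S1 using Nt by linarith
    have fiber: "card {w \<in> F. take (s * n) w = take (s * n) v} = (\<Prod>j<t * n - s * n. c (s * n + j))"
      if v: "v \<in> F" and s: "s < t" for v s
    proof -
      have sn: "s * n \<le> t * n" using s by simp
      have u: "take (s * n) v \<in> ss_verts c" "length (take (s * n) v) = s * n"
        using v sn take_ss[of v c] by (auto simp: F_def lev_def)
      have "{w \<in> F. take (s * n) w = take (s * n) v}
          = {w \<in> ss_verts c. length w = s * n + (t * n - s * n) \<and> take (s * n) w = take (s * n) v}"
        using sn by (auto simp: F_def lev_def)
      then show ?thesis using fiber_card(2)[OF u] by simp
    qed
    have row: "(\<Sum>w\<in>F. P.prob (Ev M X n t v \<inter> Ev M X n t w)) \<le> \<pi> ^ t + (\<Sum>s<t. \<pi> ^ (t + (t - Suc s)) * Q s)"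
      if v: "v \<in> F" for v
    proof -
      have fin: "finite F" unfolding F_def using finlev by simp
      have trm: "P.prob (Ev M X n t v \<inter> Ev M X n t w)
             \<le> (\<Sum>s<t. if take (s * n) w = take (s * n) v then \<pi> ^ (t + (t - Suc s)) else 0)"
        if w: "w \<in> F - {v}" for w
      proof -
        have lv: "length v = t * n" "length w = t * n" using v w by (auto simp: F_def lev_def)
        have vw: "v \<noteq> w" using w by auto
        have tpos: "0 < t"
        proof (rule ccontr)
          assume "\<not> 0 < t" then have "v = []" "w = []" using lv by auto
          then show False using vw by simp
        qed
        define s0 where "s0 = (LEAST s. take (Suc s * n) v \<noteq> take (Suc s * n) w)"
        have ex: "take (Suc (t - 1) * n) v \<noteq> take (Suc (t - 1) * n) w"
          using tpos lv vw by simp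
        have dis: "take (Suc s0 * n) v \<noteq> take (Suc s0 * n) w"
          unfolding s0_def by (rule LeastI[of _ "t - 1"]) (rule ex)
        have s0le: "s0 \<le> t - 1" unfolding s0_def by (rule Least_le) (rule ex)
        then have s0t: "s0 < t" using tpos by simp
        have agree: "take (s0 * n) v = take (s0 * n) w"
        proof (cases s0)
          case 0
          then show ?thesis by simp
        next
          case (Suc s')
          then have "s' < s0" by simp
          then have "\<not> take (Suc s' * n) v \<noteq> take (Suc s' * n) w"
            using not_less_Least[of s' "\<lambda>s. take (Suc s * n) v \<noteq> take (Suc s * n) w"]
            unfolding s0_def by blast
          then show ?thesis using Suc by simp
        qed
        have "P.prob (Ev M X n t v \<inter> Ev M X n t w) \<le> \<pi> ^ (t + (t - Suc s0))"
          unfolding \<pi>_def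
          using v w s0t agree dis by (intro T.prob_pair) (auto simp: F_def)
        also have "\<dots> = (if take (s0 * n) w = take (s0 * n) v then \<pi> ^ (t + (t - Suc s0)) else 0)"
          using agree by simp
        also have "\<dots> \<le> (\<Sum>s<t. if take (s * n) w = take (s * n) v then \<pi> ^ (t + (t - Suc s)) else 0)"
          using s0t pipos by (intro member_le_sum) auto
        finally show ?thesis .
      qed
      have "(\<Sum>w\<in>F. P.prob (Ev M X n t v \<inter> Ev M X n t w))
          = P.prob (Ev M X n t v \<inter> Ev M X n t v) + (\<Sum>w\<in>F - {v}. P.prob (Ev M X n t v \<inter> Ev M X n t w))"
        using fin v by (rule sum.remove)
      also have "P.prob (Ev M X n t v \<inter> Ev M X n t v) = \<pi> ^ t"
        unfolding \<pi>_def using v by (simp add: T.prob_Ev F_def)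
      also have "(\<Sum>w\<in>F - {v}. P.prob (Ev M X n t v \<inter> Ev M X n t w))
          \<le> (\<Sum>w\<in>F - {v}. \<Sum>s<t. if take (s * n) w = take (s * n) v then \<pi> ^ (t + (t - Suc s)) else 0)"
        by (rule sum_mono) (rule trm)
      also have "\<dots> = (\<Sum>s<t. \<Sum>w\<in>F - {v}. if take (s * n) w = take (s * n) v then \<pi> ^ (t + (t - Suc s)) else 0)"
        by (rule sum.swap)
      also have "\<dots> = (\<Sum>s<t. \<pi> ^ (t + (t - Suc s)) * real (card {w \<in> F - {v}. take (s * n) w = take (s * n) v}))"
        using fin by (intro sum.cong refl) (simp add: sum.If_cases Int_def)
      also have "\<dots> \<le> (\<Sum>s<t. \<pi> ^ (t + (t - Suc s)) * Q s)"
      proof (rule sum_mono)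
        fix s assume "s \<in> {..<t}"
        then have s: "s < t" by simp
        have "card {w \<in> F - {v}. take (s * n) w = take (s * n) v} \<le> card {w \<in> F. take (s * n) w = take (s * n) v}"
          using fin by (intro card_mono) auto
        then have "card {w \<in> F - {v}. take (s * n) w = take (s * n) v} \<le> (\<Prod>j<t * n - s * n. c (s * n + j))"
          using fiber[OF v s] by simp
        then have "real (card {w \<in> F - {v}. take (s * n) w = take (s * n) v}) \<le> Q s"
          unfolding Q_def by (rule of_nat_le_iff[THEN iffD2])
        then show "\<pi> ^ (t + (t - Suc s)) * real (card {w \<in> F - {v}. take (s * n) w = take (s * n) v}) \<le> \<pi> ^ (t + (t - Suc s)) * Q s"
          using pipos by (intro mult_left_mono) auto
      qed
      finally show ?thesis by simp
    qed
    have S2: "(\<Sum>v\<in>F. \<Sum>w\<in>F. P.prob (Ev M X n t v \<inter> Ev M X n t w)) \<le> N * (\<pi> ^ t + (\<Sum>s<t. \<pi> ^ (t + (t - Suc s)) * Q s))"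
    proof -
      have "(\<Sum>v\<in>F. \<Sum>w\<in>F. P.prob (Ev M X n t v \<inter> Ev M X n t w)) \<le> (\<Sum>v\<in>F. \<pi> ^ t + (\<Sum>s<t. \<pi> ^ (t + (t - Suc s)) * Q s))"
        by (rule sum_mono) (rule row)
      then show ?thesis using cardF by simp
    qed
    have B: "\<pi> ^ t + (\<Sum>s<t. \<pi> ^ (t + (t - Suc s)) * Q s) \<le> C * (N * \<pi> ^ (2 * t))"
      unfolding C_def
    proof (rule arith_bound[OF pipos m1 Nt, where Ns="\<lambda>s. real (\<Prod>i<s * n. c i)"])
      fix s assume s: "s < t"
      have "t * n = s * n + (t * n - s * n)" using s by simp
      then have "(\<Prod>i<t * n. c i) = (\<Prod>i<s * n + (t * n - s * n). c i)" by simp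
      also have "\<dots> = (\<Prod>i<s * n. c i) * (\<Prod>j<t * n - s * n. c (s * n + j))"
        by (rule prod_lessThan_add)
      finally have "(\<Prod>i<t * n. c i) = (\<Prod>i<s * n. c i) * (\<Prod>j<t * n - s * n. c (s * n + j))" .
      then show "N = real (\<Prod>i<s * n. c i) * Q s" by (simp add: N_def Q_def)
      show "m ^ s \<le> real (\<Prod>i<s * n. c i) * \<pi> ^ s" by (rule Npi)
    next
      fix s show "0 \<le> Q s" unfolding Q_def by (rule of_nat_0_le_iff)
    qed
    have SM: "(\<Sum>v\<in>F. P.prob (Ev M X n t v))^2 \<le> P.prob (\<Union>v\<in>F. Ev M X n t v) * (\<Sum>v\<in>F. \<Sum>w\<in>F. P.prob (Ev M X n t v \<inter> Ev M X n t w))"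
      by (rule P.second_moment[OF _ _ S1pos]) (use finlev T.Ev_sets levss in \<open>auto simp: F_def\<close>)
    define PU where "PU = P.prob (U t)"
    have PU: "P.prob (\<Union>v\<in>F. Ev M X n t v) = PU" by (simp add: PU_def U_def F_def)
    have PU0: "0 \<le> PU" by (simp add: PU_def)
    have "(N * \<pi> ^ t)^2 \<le> PU * (N * (C * (N * \<pi> ^ (2 * t))))"
    proof -
      have "(N * \<pi> ^ t)^2 \<le> PU * (N * (\<pi> ^ t + (\<Sum>s<t. \<pi> ^ (t + (t - Suc s)) * Q s)))"
        using order.trans[OF SM mult_left_mono[OF S2 measure_nonneg]] unfolding S1 PU .
      also have "\<dots> \<le> PU * (N * (C * (N * \<pi> ^ (2 * t))))"
        using B PU0 N0 by (intro mult_left_mono) auto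
      finally show ?thesis .
    qed
    also have "PU * (N * (C * (N * \<pi> ^ (2 * t)))) = (PU * C) * (N * \<pi> ^ t)^2"
      unfolding power_even_eq power2_eq_square by (simp only: ac_simps)
    finally have "1 * (N * \<pi> ^ t)^2 \<le> (PU * C) * (N * \<pi> ^ t)^2" by simp
    moreover have "0 < (N * \<pi> ^ t)^2"
    proof -
      have "0 < N * \<pi> ^ t" using Nt by linarith
      then show ?thesis by (rule zero_less_power)
    qed
    ultimately have "1 \<le> PU * C" using mult_le_cancel_right_pos by blast
    then show ?thesis using Cpos by (simp add: PU_def divide_le_eq mult.commute)
  qed
  have Udec: "U (Suc t) \<subseteq> U t" for t
  proof
    fix \<omega> assume "\<omega> \<in> U (Suc t)"
    then obtain v where v: "v \<in> lev c (Suc t * n)" "\<omega> \<in> Ev M X n (Suc t) v" by (auto simp: U_def)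
    then show "\<omega> \<in> U t" using T.Ev_mono[OF v(1)] unfolding U_def by blast
  qed
  have lim: "(\<lambda>t. P.prob (U t)) \<longlonglongrightarrow> P.prob (\<Inter>t. U t)"
    using Usets Udec by (intro P.finite_Lim_measure_decseq) (auto intro!: decseq_SucI)
  have "1 / C \<le> P.prob (\<Inter>t. U t)"
    by (rule LIMSEQ_le_const[OF lim]) (use Ubound in auto)
  also have "P.prob (\<Inter>t. U t) \<le> P.prob {\<omega> \<in> space M. infinite (\<Union>n. infected c (\<lambda>v. X v \<omega>) n)}"
  proof (rule P.finite_measure_mono[OF _ T.surv_sets])
    show "(\<Inter>t. U t) \<subseteq> {\<omega> \<in> space M. infinite (\<Union>n. infected c (\<lambda>v. X v \<omega>) n)}"
    proof
      fix \<omega> assume om: "\<omega> \<in> (\<Inter>t. U t)"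
      have H: "\<forall>t. \<exists>v. v \<in> ss_verts c \<and> length v = t * n \<and> (\<forall>b<t. cov (map (\<lambda>v. X v \<omega>) (blk n v b)))"
      proof
        fix t
        obtain v where v: "v \<in> lev c (t * n)" "\<omega> \<in> Ev M X n t v" using om by (auto simp: U_def)
        then show "\<exists>v. v \<in> ss_verts c \<and> length v = t * n \<and> (\<forall>b<t. cov (map (\<lambda>v. X v \<omega>) (blk n v b)))"
          by (intro exI[of _ v]) (auto simp: lev_def Ev_def Xs_def)
      qed
      have "\<omega> \<in> space M" using om Usets[of 0] sets.sets_into_space by blast
      then show "\<omega> \<in> {\<omega> \<in> space M. infinite (\<Union>n. infected c (\<lambda>v. X v \<omega>) n)}"
        using survive[OF npos H] by simp
    qed
  qed
  finally have fin: "1 / C \<le> P.prob {\<omega> \<in> space M. infinite (\<Union>n. infected c (\<lambda>v. X v \<omega>) n)}" .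
  have "0 < 1 / C" using Cpos by simp
  then show ?thesis using fin by linarith
qed


end
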